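(* Let $K$ be a $b$-complete idempotent semiring, $X$ a nonempty set, and $V$ a $b$-complete functional semimodule on $X$. Then $V$ is a functional $b$-semimodule on $X$ (i.e., a $b$-subsemimodule of $K(X)$) if and only if every integral operator $A\colon V\to W$, for every $b$-complete semimodule $W$ over $K$, is $b$-linear.
   Context: Idempotent semigroup: commutative, associative, idempotent $\oplus$ with order $x\preceq y$ iff $x\oplus y=y$; $\oplus X$ least upper bound; $b$-complete: every bounded above subset (incl. $\emptyset$) has a least upper bound. A homomorphism of $b$-complete semigroups is a $b$-homomorphism if it preserves least upper bounds of bounded above subsets. Idempotent semiring: idempotent commutative associative $\oplus$, associative $\odot$ bi-distributive, unit $\mathbf 1$, zero $\mathbf 0$; $b$-complete if $b$-complete and $k\odot(\oplus X)=\oplus(k\odot X)$, $(\oplus X)\odot k=\oplus(X\odot k)$ for bounded $X$. Idempotent semimodule over $K$: idempotent semigroup with associative bi-distributive $K$-action, $\mathbf 1\odot x=x$, $\mathbf 0\odot x=\mathbf 0$; $b$-complete if $b$-complete as semigroup and $(\oplus Q)\odot x=\oplus(Q\odot x)$, $k\odot(\oplus X)=\oplus(k\odot X)$ for bounded $Q,X$. A map is linear if it preserves $\oplus$ and scalar multiplication; $b$-linear if moreover a $b$-homomorphism. A subsemimodule is a subset closed under $\oplus$ and scalar multiplication; a subsemimodule of a $b$-complete semimodule is a $b$-subsemimodule if the embedding is a $b$-homomorphism. If $W$ is $b$-complete and $V\subset W$ is closed under scalar multiplication and an upper semilattice in the induced order, $V$ is a quasisubsemimodule if it is a semimodule under $x\oplus_V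 y=$ least upper bound of $\{x,y\}$ in $V$. $K(X)$: all maps $X\to K$, pointwise operations. A functional semimodule on $X$ is a quasisubsemimodule of $K(X)$; $b$-complete if it is a $b$-complete semimodule; a functional $b$-semimodule if it is a $b$-subsemimodule of $K(X)$. A mapping $A\colon V\to W$ is an integral operator if there is a map $k\colon X\to W$ (kernel) such that for every $f\in V$ the set $\{f(x)\odot k(x)\mid x\in X\}$ is bounded in $W$ and $Af=\sup_{x\in X}(f(x)\odot k(x))$. *)

theory Defs
  imports Main
begin

definition lep :: "('a \<Rightarrow> 'a \<Rightarrow> 'a) \<Rightarrow> 'a \<Rightarrow> 'a \<Rightarrow> bool" where
  "lep p x y \<longleftrightarrow> p x y = y"

definition is_lub :: "'a set \<Rightarrow> ('a \<Rightarrow> 'a \<Rightarrow> 'a) \<Rightarrow> 'a set \<Rightarrow> 'a \<Rightarrow> bool" where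
  "is_lub S p A u \<longleftrightarrow> u \<in> S \<and> (\<forall>a\<in>A. lep p a u) \<and>
     (\<forall>v\<in>S. (\<forall>a\<in>A. lep p a v) \<longrightarrow> lep p u v)"

definition bdd :: "'a set \<Rightarrow> ('a \<Rightarrow> 'a \<Rightarrow> 'a) \<Rightarrow> 'a set \<Rightarrow> bool" where
  "bdd S p A \<longleftrightarrow> (\<exists>v\<in>S. \<forall>a\<in>A. lep p a v)"

definition b_complete :: "'a set \<Rightarrow> ('a \<Rightarrow> 'a \<Rightarrow> 'a) \<Rightarrow> bool" where
  "b_complete S p \<longleftrightarrow> (\<forall>A. A \<subseteq> S \<longrightarrow> bdd S p A \<longrightarrow> (\<exists>u. is_lub S p A u))"

definition idem_sg :: "'a set \<Rightarrow> ('a \<Rightarrow> 'a \<Rightarrow> 'a) \<Rightarrow> bool" where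
  "idem_sg S p \<longleftrightarrow> (\<forall>x\<in>S. \<forall>y\<in>S. p x y \<in> S) \<and>
     (\<forall>x\<in>S. \<forall>y\<in>S. p x y = p y x) \<and>
     (\<forall>x\<in>S. \<forall>y\<in>S. \<forall>z\<in>S. p (p x y) z = p x (p y z)) \<and>
     (\<forall>x\<in>S. p x x = x)"

section \<open>Idempotent semirings (carrier = the whole type 'k)\<close>

definition idem_semiring :: "('k \<Rightarrow> 'k \<Rightarrow> 'k) \<Rightarrow> ('k \<Rightarrow> 'k \<Rightarrow> 'k) \<Rightarrow> 'k \<Rightarrow> 'k \<Rightarrow> bool" where
  "idem_semiring pl ml zK oK \<longleftrightarrow> idem_sg UNIV pl \<and>
     (\<forall>x y z. ml (ml x y) z = ml x (ml y z)) \<and>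
     (\<forall>x y z. ml x (pl y z) = pl (ml x y) (ml x z)) \<and>
     (\<forall>x y z. ml (pl x y) z = pl (ml x z) (ml y z)) \<and>
     (\<forall>x. ml oK x = x \<and> ml x oK = x) \<and>
     (\<forall>x. pl x zK = x \<and> ml zK x = zK \<and> ml x zK = zK)"

definition b_complete_semiring :: "('k \<Rightarrow> 'k \<Rightarrow> 'k) \<Rightarrow> ('k \<Rightarrow> 'k \<Rightarrow> 'k) \<Rightarrow> 'k \<Rightarrow> 'k \<Rightarrow> bool" where
  "b_complete_semiring pl ml zK oK \<longleftrightarrow> idem_semiring pl ml zK oK \<and> b_complete UNIV pl \<and>
     (\<forall>A u k. bdd UNIV pl A \<longrightarrow> is_lub UNIV pl A u \<longrightarrow>
        is_lub UNIV pl (ml k ` A) (ml k u) \<and> is_lub UNIV pl ((\<lambda>a. ml a k) ` A) (ml u k))"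

section \<open>Idempotent semimodules over K (carrier W, addition wp, action sm, zero wz)\<close>

definition semimodule ::
  "('k \<Rightarrow> 'k \<Rightarrow> 'k) \<Rightarrow> ('k \<Rightarrow> 'k \<Rightarrow> 'k) \<Rightarrow> 'k \<Rightarrow> 'k \<Rightarrow>
   'w set \<Rightarrow> ('w \<Rightarrow> 'w \<Rightarrow> 'w) \<Rightarrow> ('k \<Rightarrow> 'w \<Rightarrow> 'w) \<Rightarrow> 'w \<Rightarrow> bool" where
  "semimodule pl ml zK oK W wp sm wz \<longleftrightarrow> idem_sg W wp \<and> wz \<in> W \<and>
     (\<forall>x\<in>W. wp x wz = x) \<and>
     (\<forall>c. \<forall>x\<in>W. sm c x \<in> W) \<and>
     (\<forall>c d. \<forall>x\<in>W. sm (ml c d) x = sm c (sm d x)) \<and>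
     (\<forall>c. \<forall>x\<in>W. \<forall>y\<in>W. sm c (wp x y) = wp (sm c x) (sm c y)) \<and>
     (\<forall>c d. \<forall>x\<in>W. sm (pl c d) x = wp (sm c x) (sm d x)) \<and>
     (\<forall>x\<in>W. sm oK x = x) \<and>
     (\<forall>x\<in>W. sm zK x = wz)"

definition b_complete_semimodule ::
  "('k \<Rightarrow> 'k \<Rightarrow> 'k) \<Rightarrow> ('k \<Rightarrow> 'k \<Rightarrow> 'k) \<Rightarrow> 'k \<Rightarrow> 'k \<Rightarrow>
   'w set \<Rightarrow> ('w \<Rightarrow> 'w \<Rightarrow> 'w) \<Rightarrow> ('k \<Rightarrow> 'w \<Rightarrow> 'w) \<Rightarrow> 'w \<Rightarrow> bool" where
  "b_complete_semimodule pl ml zK oK W wp sm wz \<longleftrightarrow>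
     semimodule pl ml zK oK W wp sm wz \<and> b_complete W wp \<and>
     (\<forall>Q u. \<forall>x\<in>W. bdd UNIV pl Q \<longrightarrow> is_lub UNIV pl Q u \<longrightarrow>
        is_lub W wp ((\<lambda>q. sm q x) ` Q) (sm u x)) \<and>
     (\<forall>A u c. A \<subseteq> W \<longrightarrow> bdd W wp A \<longrightarrow> is_lub W wp A u \<longrightarrow>
        is_lub W wp (sm c ` A) (sm c u))"

section \<open>The function semimodule K(X) (X = the whole type 'x) and functional semimodules\<close>

definition fplus :: "('k \<Rightarrow> 'k \<Rightarrow> 'k) \<Rightarrow> ('x \<Rightarrow> 'k) \<Rightarrow> ('x \<Rightarrow> 'k) \<Rightarrow> ('x \<Rightarrow> 'k)" where
  "fplus pl f g = (\<lambda>x. pl (f x) (g x))"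

definition fsm :: "('k \<Rightarrow> 'k \<Rightarrow> 'k) \<Rightarrow> 'k \<Rightarrow> ('x \<Rightarrow> 'k) \<Rightarrow> ('x \<Rightarrow> 'k)" where
  "fsm ml c f = (\<lambda>x. ml c (f x))"

definition fzero :: "'k \<Rightarrow> ('x \<Rightarrow> 'k)" where
  "fzero zK = (\<lambda>x. zK)"

definition vplus :: "('k \<Rightarrow> 'k \<Rightarrow> 'k) \<Rightarrow> ('x \<Rightarrow> 'k) set \<Rightarrow> ('x \<Rightarrow> 'k) \<Rightarrow> ('x \<Rightarrow> 'k) \<Rightarrow> ('x \<Rightarrow> 'k)" where
  "vplus pl V f g = (THE h. is_lub V (fplus pl) {f, g} h)"

text \<open>Functional semimodule = quasisubsemimodule of K(X).\<close>
definition functional_semimodule ::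
  "('k \<Rightarrow> 'k \<Rightarrow> 'k) \<Rightarrow> ('k \<Rightarrow> 'k \<Rightarrow> 'k) \<Rightarrow> 'k \<Rightarrow> 'k \<Rightarrow> ('x \<Rightarrow> 'k) set \<Rightarrow> bool" where
  "functional_semimodule pl ml zK oK V \<longleftrightarrow>
     (\<forall>c. \<forall>f\<in>V. fsm ml c f \<in> V) \<and>
     (\<forall>f\<in>V. \<forall>g\<in>V. \<exists>h. is_lub V (fplus pl) {f, g} h) \<and>
     semimodule pl ml zK oK V (vplus pl V) (fsm ml) (fzero zK)"

definition b_complete_functional_semimodule ::
  "('k \<Rightarrow> 'k \<Rightarrow> 'k) \<Rightarrow> ('k \<Rightarrow> 'k \<Rightarrow> 'k) \<Rightarrow> 'k \<Rightarrow> 'k \<Rightarrow> ('x \<Rightarrow> 'k) set \<Rightarrow> bool" where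
  "b_complete_functional_semimodule pl ml zK oK V \<longleftrightarrow>
     functional_semimodule pl ml zK oK V \<and>
     b_complete_semimodule pl ml zK oK V (vplus pl V) (fsm ml) (fzero zK)"

definition functional_b_semimodule ::
  "('k \<Rightarrow> 'k \<Rightarrow> 'k) \<Rightarrow> ('k \<Rightarrow> 'k \<Rightarrow> 'k) \<Rightarrow> 'k \<Rightarrow> 'k \<Rightarrow> ('x \<Rightarrow> 'k) set \<Rightarrow> bool" where
  "functional_b_semimodule pl ml zK oK V \<longleftrightarrow>
     (\<forall>f\<in>V. \<forall>g\<in>V. fplus pl f g \<in> V) \<and>
     (\<forall>c. \<forall>f\<in>V. fsm ml c f \<in> V) \<and>
     b_complete_semimodule pl ml zK oK V (fplus pl) (fsm ml) (fzero zK) \<and>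
     (\<forall>A u. A \<subseteq> V \<longrightarrow> bdd V (fplus pl) A \<longrightarrow> is_lub V (fplus pl) A u \<longrightarrow>
        is_lub UNIV (fplus pl) A u)"

definition integral_operator ::
  "('k \<Rightarrow> 'k \<Rightarrow> 'k) \<Rightarrow> ('k \<Rightarrow> 'k \<Rightarrow> 'k) \<Rightarrow> ('x \<Rightarrow> 'k) set \<Rightarrow>
   'w set \<Rightarrow> ('w \<Rightarrow> 'w \<Rightarrow> 'w) \<Rightarrow> ('k \<Rightarrow> 'w \<Rightarrow> 'w) \<Rightarrow> (('x \<Rightarrow> 'k) \<Rightarrow> 'w) \<Rightarrow> bool" where
  "integral_operator pl ml V W wp sm A \<longleftrightarrow>
     (\<exists>k. (\<forall>x. k x \<in> W) \<and>
        (\<forall>f\<in>V. bdd W wp (range (\<lambda>x. sm (f x) (k x))) \<and>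
                is_lub W wp (range (\<lambda>x. sm (f x) (k x))) (A f)))"

definition b_linear ::
  "'v set \<Rightarrow> ('v \<Rightarrow> 'v \<Rightarrow> 'v) \<Rightarrow> ('k \<Rightarrow> 'v \<Rightarrow> 'v) \<Rightarrow>
   'w set \<Rightarrow> ('w \<Rightarrow> 'w \<Rightarrow> 'w) \<Rightarrow> ('k \<Rightarrow> 'w \<Rightarrow> 'w) \<Rightarrow> ('v \<Rightarrow> 'w) \<Rightarrow> bool" where
  "b_linear V vp vsm W wp sm A \<longleftrightarrow>
     (\<forall>f\<in>V. A f \<in> W) \<and>
     (\<forall>f\<in>V. \<forall>g\<in>V. A (vp f g) = wp (A f) (A g)) \<and>
     (\<forall>c. \<forall>f\<in>V. A (vsm c f) = sm c (A f)) \<and>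
     (\<forall>S u. S \<subseteq> V \<longrightarrow> bdd V vp S \<longrightarrow> is_lub V vp S u \<longrightarrow> is_lub W wp (A ` S) (A u))"

end

theory Submission
  imports Defs
begin


lemma sgD: assumes "idem_sg S p" "x \<in> S" "y \<in> S" "z \<in> S"
  shows "p x y \<in> S" "p x y = p y x" "p (p x y) z = p x (p y z)" "p x x = x"
  using assms unfolding idem_sg_def by blast+

lemma lep_refl: "idem_sg S p \<Longrightarrow> x \<in> S \<Longrightarrow> lep p x x"
  by (simp add: idem_sg_def lep_def)

lemma lep_trans: assumes sg: "idem_sg S p" and S: "x \<in> S" "y \<in> S" "z \<in> S" and 1: "lep p x y" and 2: "lep p y z" shows "lep p x z"
proof -
  have "p x z = p x (p y z)" using 2 by (simp add: lep_def)
  also have "\<dots> = p (p x y) z" using sgD(3)[OF sg S] by simp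
  also have "\<dots> = z" using 1 2 by (simp add: lep_def)
  finally show ?thesis by (simp add: lep_def)
qed

lemma lep_antisym: "\<forall>x\<in>S. \<forall>y\<in>S. p x y = p y x \<Longrightarrow> x \<in> S \<Longrightarrow> y \<in> S \<Longrightarrow> lep p x y \<Longrightarrow> lep p y x \<Longrightarrow> x = y"
  unfolding lep_def by metis

lemma lep_upper1: assumes sg: "idem_sg S p" and S: "x \<in> S" "y \<in> S" shows "lep p x (p x y)"
proof -
  have "p x (p x y) = p (p x x) y" using sgD(3)[OF sg S(1) S(1) S(2)] by simp
  then show ?thesis using sgD(4)[OF sg S(1) S(1) S(1)] by (simp add: lep_def)
qed

lemma lep_upper2: assumes sg: "idem_sg S p" and S: "x \<in> S" "y \<in> S" shows "lep p y (p x y)"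
  using lep_upper1[OF sg S(2) S(1)] sgD(2)[OF sg S S(1)] by simp

lemma lep_lub2: assumes sg: "idem_sg S p" and S: "x \<in> S" "y \<in> S" "z \<in> S" and 1: "lep p x z" and 2: "lep p y z" shows "lep p (p x y) z"
proof -
  have "p (p x y) z = p x (p y z)" using sgD(3)[OF sg S] by simp
  then show ?thesis using 1 2 by (simp add: lep_def)
qed

lemma lub_unique: "\<forall>x\<in>S. \<forall>y\<in>S. p x y = p y x \<Longrightarrow> is_lub S p A u \<Longrightarrow> is_lub S p A u' \<Longrightarrow> u = u'"
proof -
  assume c: "\<forall>x\<in>S. \<forall>y\<in>S. p x y = p y x" and 1: "is_lub S p A u" and 2: "is_lub S p A u'"
  have "u \<in> S" "u' \<in> S" "lep p u u'" "lep p u' u" using 1 2 unfolding is_lub_def by blast+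
  then show ?thesis using lep_antisym[OF c] by blast
qed

lemma lub_pair: "idem_sg S p \<Longrightarrow> x \<in> S \<Longrightarrow> y \<in> S \<Longrightarrow> is_lub S p {x,y} (p x y)"
proof -
  assume sg: "idem_sg S p" and x: "x \<in> S" and y: "y \<in> S"
  have xy: "p x y \<in> S" using sg x y by (simp add: idem_sg_def)
  show ?thesis unfolding is_lub_def using xy lep_upper1[OF sg x y] lep_upper2[OF sg x y] lep_lub2[OF sg x y] by blast
qed

lemma lub_range_join:
  assumes sg: "idem_sg W wp" and a: "\<And>x. a x \<in> W" and b: "\<And>x. b x \<in> W"
    and s: "is_lub W wp (range a) s" and t: "is_lub W wp (range b) t"
  shows "is_lub W wp (range (\<lambda>x. wp (a x) (b x))) (wp s t)"
proof -
  have sW: "s \<in> W" and tW: "t \<in> W" using s t by (auto simp: is_lub_def)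
  have stW: "wp s t \<in> W" using sg sW tW by (auto simp: idem_sg_def)
  have ub: "lep wp (wp (a x) (b x)) (wp s t)" for x
  proof -
    have "lep wp (a x) s" "lep wp (b x) t" using s t by (auto simp: is_lub_def)
    then have "lep wp (a x) (wp s t)" "lep wp (b x) (wp s t)"
      using lep_trans[OF sg] lep_upper1[OF sg sW tW] lep_upper2[OF sg sW tW] a b sW tW stW by blast+
    then show ?thesis using lep_lub2[OF sg] a b stW by blast
  qed
  have least: "lep wp (wp s t) v" if vW: "v \<in> W" and vu: "\<forall>z\<in>range (\<lambda>x. wp (a x) (b x)). lep wp z v" for v
  proof -
    have "lep wp (a x) v \<and> lep wp (b x) v" for x
    proof -
      have abW: "wp (a x) (b x) \<in> W" using sg a b by (auto simp: idem_sg_def)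
      have "lep wp (wp (a x) (b x)) v" using vu by auto
      then show ?thesis using lep_trans[OF sg] lep_upper1[OF sg a b] lep_upper2[OF sg a b] a b abW vW by blast
    qed
    then have "lep wp s v" "lep wp t v" using s t vW by (auto simp: is_lub_def)
    then show ?thesis using lep_lub2[OF sg sW tW vW] by blast
  qed
  show ?thesis unfolding is_lub_def using stW ub least by blast
qed

lemma lub_interchange:
  assumes sg: "idem_sg W wp" and FW: "\<And>f x. F f x \<in> W"
    and Af: "\<And>f. f \<in> S \<Longrightarrow> is_lub W wp (range (F f)) (A f)"
    and Au: "is_lub W wp (range (F u)) (A u)"
    and pt: "\<And>x. is_lub W wp ((\<lambda>f. F f x) ` S) (F u x)"
  shows "is_lub W wp (A ` S) (A u)"
proof -
  have AuW: "A u \<in> W" using Au by (auto simp: is_lub_def)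
  have AfW: "f \<in> S \<Longrightarrow> A f \<in> W" for f using Af by (auto simp: is_lub_def)
  have ub: "lep wp (A f) (A u)" if fS: "f \<in> S" for f
  proof -
    have "lep wp (F f x) (A u)" for x
    proof -
      have "lep wp (F f x) (F u x)" using pt fS by (auto simp: is_lub_def)
      moreover have "lep wp (F u x) (A u)" using Au by (auto simp: is_lub_def)
      ultimately show ?thesis using lep_trans[OF sg] FW AuW by blast
    qed
    then show ?thesis using Af[OF fS] AuW by (auto simp: is_lub_def)
  qed
  have least: "lep wp (A u) v" if vW: "v \<in> W" and vu: "\<forall>z\<in>A ` S. lep wp z v" for v
  proof -
    have "lep wp (F u x) v" for x
    proof -
      have "lep wp (F f x) v" if fS: "f \<in> S" for f
      proof -
        have "lep wp (F f x) (A f)" using Af[OF fS] by (auto simp: is_lub_def)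
        moreover have "lep wp (A f) v" using vu fS by auto
        ultimately show ?thesis using lep_trans[OF sg] FW AfW[OF fS] vW by blast
      qed
      then show ?thesis using pt vW by (auto simp: is_lub_def)
    qed
    then show ?thesis using Au vW by (auto simp: is_lub_def)
  qed
  show ?thesis unfolding is_lub_def using AuW ub least by blast
qed

lemma lep_cong: "x \<in> W \<Longrightarrow> y \<in> W \<Longrightarrow> \<forall>x\<in>W. \<forall>y\<in>W. p x y = q x y \<Longrightarrow> lep p x y = lep q x y"
  by (simp add: lep_def)

lemma is_lub_cong: assumes "A \<subseteq> W" "\<forall>x\<in>W. \<forall>y\<in>W. p x y = q x y" shows "is_lub W p A u = is_lub W q A u"
proof (cases "u \<in> W")
  case True
  have 1: "(\<forall>a\<in>A. lep p a u) = (\<forall>a\<in>A. lep q a u)" using assms True lep_cong[of _ W u p q] by blast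
  have 2: "(\<forall>v\<in>W. (\<forall>a\<in>A. lep p a v) \<longrightarrow> lep p u v) = (\<forall>v\<in>W. (\<forall>a\<in>A. lep q a v) \<longrightarrow> lep q u v)"
    using assms True lep_cong[of _ W _ p q] by (metis (no_types, lifting) subsetD)
  show ?thesis unfolding is_lub_def using 1 2 by blast
qed (simp add: is_lub_def)

lemma bdd_cong: assumes "A \<subseteq> W" "\<forall>x\<in>W. \<forall>y\<in>W. p x y = q x y" shows "bdd W p A = bdd W q A"
  unfolding bdd_def using assms lep_cong[of _ W _ p q] by (metis (no_types, lifting) subsetD)

lemma b_complete_cong: "\<forall>x\<in>W. \<forall>y\<in>W. p x y = q x y \<Longrightarrow> b_complete W p = b_complete W q"
  unfolding b_complete_def using bdd_cong[of _ W p q] is_lub_cong[of _ W p q] by metis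

lemma idem_sg_cong: assumes e: "\<forall>x\<in>W. \<forall>y\<in>W. p x y = q x y" and sg: "idem_sg W p"
  shows "idem_sg W q"
proof -
  have e': "\<And>x y. x \<in> W \<Longrightarrow> y \<in> W \<Longrightarrow> q x y = p x y" using e by simp
  have cl: "\<And>x y. x \<in> W \<Longrightarrow> y \<in> W \<Longrightarrow> p x y \<in> W" using sgD(1)[OF sg] by blast
  show ?thesis unfolding idem_sg_def
    using sgD[OF sg] by (simp add: e' cl)
qed

lemma semimodule_cong: assumes e: "\<forall>x\<in>W. \<forall>y\<in>W. p x y = q x y"
    and S: "semimodule pl ml zK oK W p sm wz"
  shows "semimodule pl ml zK oK W q sm wz"
proof -
  have e': "\<And>x y. x \<in> W \<Longrightarrow> y \<in> W \<Longrightarrow> q x y = p x y" using e by simp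
  have sg: "idem_sg W p" using S by (simp add: semimodule_def)
  have cl: "\<And>c x. x \<in> W \<Longrightarrow> sm c x \<in> W" using S by (simp add: semimodule_def)
  have w: "wz \<in> W" using S by (simp add: semimodule_def)
  show ?thesis using S idem_sg_cong[OF e sg] unfolding semimodule_def by (simp add: e' cl w)
qed

lemma bcs_cong:
  assumes e: "\<forall>x\<in>W. \<forall>y\<in>W. p x y = q x y" and B: "b_complete_semimodule pl ml zK oK W p sm wz"
  shows "b_complete_semimodule pl ml zK oK W q sm wz"
proof -
  have e2: "\<forall>x\<in>W. \<forall>y\<in>W. q x y = p x y" using e by simp
  have sm: "semimodule pl ml zK oK W p sm wz" and bc: "b_complete W p"
    and c3: "\<And>Q u x. x \<in> W \<Longrightarrow> bdd UNIV pl Q \<Longrightarrow> is_lub UNIV pl Q u \<Longrightarrow>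
        is_lub W p ((\<lambda>q. sm q x) ` Q) (sm u x)"
    and c4: "\<And>A u c. A \<subseteq> W \<Longrightarrow> bdd W p A \<Longrightarrow> is_lub W p A u \<Longrightarrow>
        is_lub W p (sm c ` A) (sm c u)"
    using B unfolding b_complete_semimodule_def by blast+
  have cl: "\<And>c x. x \<in> W \<Longrightarrow> sm c x \<in> W" using sm by (simp add: semimodule_def)
  have 1: "semimodule pl ml zK oK W q sm wz" by (rule semimodule_cong[OF e sm])
  have 2: "b_complete W q" using b_complete_cong[OF e] bc by blast
  have 3: "is_lub W q ((\<lambda>q. sm q x) ` Q) (sm u x)"
    if "x \<in> W" "bdd UNIV pl Q" "is_lub UNIV pl Q u" for Q u x
  proof -
    have sub: "(\<lambda>q. sm q x) ` Q \<subseteq> W" using cl that(1) by blast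
    show ?thesis using c3[OF that] is_lub_cong[OF sub e] by blast
  qed
  have 4: "is_lub W q (sm c ` A) (sm c u)"
    if "A \<subseteq> W" "bdd W q A" "is_lub W q A u" for A u c
  proof -
    have sub: "sm c ` A \<subseteq> W" using cl that(1) by blast
    have "bdd W p A" "is_lub W p A u" using that bdd_cong[OF that(1) e] is_lub_cong[OF that(1) e] by blast+
    then show ?thesis using c4[OF that(1)] is_lub_cong[OF sub e] by blast
  qed
  show ?thesis unfolding b_complete_semimodule_def using 1 2 3 4 by blast
qed



lemma fsg: "idem_sg UNIV pl \<Longrightarrow> idem_sg UNIV (fplus pl)"
  unfolding idem_sg_def fplus_def by (auto simp: fun_eq_iff)

lemma lep_fun: "lep (fplus pl) f g \<longleftrightarrow> (\<forall>x. lep pl (f x) (g x))"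
  unfolding lep_def fplus_def by (auto simp: fun_eq_iff)

lemma fun_lub_pt:
  assumes "is_lub UNIV (fplus pl) A u" shows "is_lub UNIV pl ((\<lambda>f. f x) ` A) (u x)"
proof -
  have ub: "\<forall>f\<in>A. lep (fplus pl) f u" and le: "\<And>v. \<forall>f\<in>A. lep (fplus pl) f v \<Longrightarrow> lep (fplus pl) u v"
    using assms by (auto simp: is_lub_def)
  have "lep pl (u x) v" if "\<forall>a\<in>(\<lambda>f. f x) ` A. lep pl a v" for v
  proof -
    have "\<forall>f\<in>A. lep (fplus pl) f (u(x := v))" using ub that by (auto simp: lep_fun)
    then have "lep (fplus pl) u (u(x := v))" using le by blast
    then show ?thesis by (auto simp: lep_fun dest: spec[of _ x])
  qed
  then show ?thesis using ub by (auto simp: is_lub_def lep_fun)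
qed

lemma fun_lub_of_pt:
  assumes "\<And>x. is_lub UNIV pl ((\<lambda>f. f x) ` A) (u x)" shows "is_lub UNIV (fplus pl) A u"
  using assms unfolding is_lub_def lep_fun by auto

lemma fun_bdd_pt: "bdd UNIV (fplus pl) A \<Longrightarrow> bdd UNIV pl ((\<lambda>f. f x) ` A)"
  unfolding bdd_def lep_fun by auto

lemma fun_bdd_of_pt: assumes "\<And>x. bdd UNIV pl ((\<lambda>f. f x) ` A)" shows "bdd UNIV (fplus pl) A"
proof -
  have "\<forall>x. \<exists>v. \<forall>f\<in>A. lep pl (f x) v" using assms unfolding bdd_def by auto
  then obtain v where "\<forall>x. \<forall>f\<in>A. lep pl (f x) (v x)" by metis
  then show ?thesis unfolding bdd_def lep_fun by auto
qed

lemma KX_bcs: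
  fixes pl ml :: "'k \<Rightarrow> 'k \<Rightarrow> 'k"
  assumes K: "b_complete_semiring pl ml zK oK"
  shows "b_complete_semimodule pl ml zK oK UNIV (fplus pl) (fsm ml) (fzero zK :: 'x \<Rightarrow> 'k)"
proof -
  have IS: "idem_semiring pl ml zK oK" and BC: "b_complete UNIV pl"
    and LM: "\<And>A u k. bdd UNIV pl A \<Longrightarrow> is_lub UNIV pl A u \<Longrightarrow>
        is_lub UNIV pl (ml k ` A) (ml k u) \<and> is_lub UNIV pl ((\<lambda>a. ml a k) ` A) (ml u k)"
    using K by (auto simp: b_complete_semiring_def)
  have sg: "idem_sg UNIV pl" using IS by (simp add: idem_semiring_def)
  have sm: "semimodule pl ml zK oK UNIV (fplus pl) (fsm ml) (fzero zK)"
  proof -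
    have a: "\<And>x y z. ml (ml x y) z = ml x (ml y z)"
      and d1: "\<And>x y z. ml x (pl y z) = pl (ml x y) (ml x z)"
      and d2: "\<And>x y z. ml (pl x y) z = pl (ml x z) (ml y z)"
      and u: "\<And>x. ml oK x = x" and z1: "\<And>x. pl x zK = x" and z2: "\<And>x. ml zK x = zK"
      using IS unfolding idem_semiring_def by blast+
    show ?thesis unfolding semimodule_def
      apply (intro conjI)
      using fsg[OF sg] apply blast
      by (simp_all add: fun_eq_iff fplus_def fsm_def fzero_def a d1 d2 u z1 z2)
  qed
  have bc: "b_complete (UNIV :: ('x \<Rightarrow> 'k) set) (fplus pl)"
    unfolding b_complete_def
  proof (intro allI impI)
    fix A :: "('x \<Rightarrow> 'k) set" assume "A \<subseteq> UNIV" "bdd UNIV (fplus pl) A"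
    then have "\<forall>x. \<exists>u. is_lub UNIV pl ((\<lambda>f. f x) ` A) u"
    proof (intro allI)
      fix x
      have "bdd UNIV pl ((\<lambda>f. f x) ` A)" by (rule fun_bdd_pt[OF \<open>bdd UNIV (fplus pl) A\<close>])
      then show "\<exists>u. is_lub UNIV pl ((\<lambda>f. f x) ` A) u" using BC unfolding b_complete_def by blast
    qed
    then obtain u where "\<forall>x. is_lub UNIV pl ((\<lambda>f. f x) ` A) (u x)" by metis
    then show "\<exists>u. is_lub UNIV (fplus pl) A u" using fun_lub_of_pt by blast
  qed
  have c3: "is_lub UNIV (fplus pl) ((\<lambda>q. fsm ml q x) ` Q) (fsm ml u x)"
    if "bdd UNIV pl Q" "is_lub UNIV pl Q u" for Q u and x :: "'x \<Rightarrow> 'k"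
  proof (rule fun_lub_of_pt)
    fix y
    have "(\<lambda>f. f y) ` ((\<lambda>q. fsm ml q x) ` Q) = (\<lambda>a. ml a (x y)) ` Q"
      by (auto simp: fsm_def)
    then show "is_lub UNIV pl ((\<lambda>f. f y) ` (\<lambda>q. fsm ml q x) ` Q) (fsm ml u x y)"
      using LM[OF that] by (simp add: fsm_def)
  qed
  have c4: "is_lub UNIV (fplus pl) (fsm ml c ` A) (fsm ml c u)"
    if "bdd UNIV (fplus pl) A" "is_lub UNIV (fplus pl) A u" for u c and A :: "('x \<Rightarrow> 'k) set"
  proof (rule fun_lub_of_pt)
    fix y
    have "(\<lambda>f. f y) ` (fsm ml c ` A) = ml c ` ((\<lambda>f. f y) ` A)"
      by (auto simp: fsm_def)
    then show "is_lub UNIV pl ((\<lambda>f. f y) ` fsm ml c ` A) (fsm ml c u y)"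
      using LM[OF fun_bdd_pt[OF that(1)] fun_lub_pt[OF that(2)]] by (simp add: fsm_def)
  qed
  show ?thesis unfolding b_complete_semimodule_def using sm bc c3 c4 by blast
qed

lemma lub_restrict: "is_lub T p A u \<Longrightarrow> u \<in> S \<Longrightarrow> S \<subseteq> T \<Longrightarrow> is_lub S p A u"
  unfolding is_lub_def by blast

lemma vplus_eq:
  assumes sg: "idem_sg UNIV pl" and fV: "f \<in> V" "g \<in> V" "fplus pl f g \<in> V"
  shows "vplus pl V f g = fplus pl f g"
proof -
  have L: "is_lub V (fplus pl) {f, g} (fplus pl f g)"
    using lub_restrict[OF lub_pair[OF fsg[OF sg]] fV(3)] by simp
  have c: "\<forall>x\<in>V. \<forall>y\<in>V. fplus pl x y = fplus pl y x" using fsg[OF sg] unfolding idem_sg_def by blast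
  show ?thesis unfolding vplus_def
  proof (rule the_equality)
    show "is_lub V (fplus pl) {f, g} (fplus pl f g)" by (rule L)
  next
    fix h assume "is_lub V (fplus pl) {f, g} h"
    then show "h = fplus pl f g" using lub_unique[OF c _ L] by blast
  qed
qed



lemma dir1:
  fixes pl ml :: "'k \<Rightarrow> 'k \<Rightarrow> 'k" and V :: "('x \<Rightarrow> 'k) set" and W :: "'w set"
    and A :: "('x \<Rightarrow> 'k) \<Rightarrow> 'w"
  assumes K: "b_complete_semiring pl ml zK oK"
    and FB: "functional_b_semimodule pl ml zK oK V"
    and BW: "b_complete_semimodule pl ml zK oK W wp sm wz"
    and IO: "integral_operator pl ml V W wp sm A"
  shows "b_linear V (vplus pl V) (fsm ml) W wp sm A"
proof -
  have sg: "idem_sg UNIV pl" using K by (simp add: b_complete_semiring_def idem_semiring_def)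
  have addV: "\<And>f g. f \<in> V \<Longrightarrow> g \<in> V \<Longrightarrow> fplus pl f g \<in> V"
    and smV: "\<And>c f. f \<in> V \<Longrightarrow> fsm ml c f \<in> V"
    and BL: "\<And>S u. S \<subseteq> V \<Longrightarrow> bdd V (fplus pl) S \<Longrightarrow> is_lub V (fplus pl) S u \<Longrightarrow> is_lub UNIV (fplus pl) S u"
    using FB unfolding functional_b_semimodule_def by blast+
  have eV: "\<forall>x\<in>V. \<forall>y\<in>V. vplus pl V x y = fplus pl x y"
    using vplus_eq[OF sg] addV by blast
  have SMW: "semimodule pl ml zK oK W wp sm wz" using BW by (simp add: b_complete_semimodule_def)
  have sgW: "idem_sg W wp" using SMW by (simp add: semimodule_def)
  have comW: "\<forall>x\<in>W. \<forall>y\<in>W. wp x y = wp y x" using sgW unfolding idem_sg_def by blast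
  have smW: "\<And>c x. x \<in> W \<Longrightarrow> sm c x \<in> W"
    and sm_assoc: "\<And>c d x. x \<in> W \<Longrightarrow> sm (ml c d) x = sm c (sm d x)"
    and sm_dist: "\<And>c d x. x \<in> W \<Longrightarrow> sm (pl c d) x = wp (sm c x) (sm d x)"
    using SMW unfolding semimodule_def by blast+
  have C3: "\<And>Q u x. x \<in> W \<Longrightarrow> bdd UNIV pl Q \<Longrightarrow> is_lub UNIV pl Q u \<Longrightarrow>
        is_lub W wp ((\<lambda>q. sm q x) ` Q) (sm u x)"
    and C4: "\<And>B u c. B \<subseteq> W \<Longrightarrow> bdd W wp B \<Longrightarrow> is_lub W wp B u \<Longrightarrow>
        is_lub W wp (sm c ` B) (sm c u)"
    using BW unfolding b_complete_semimodule_def by blast+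
  obtain k where kW: "\<And>x. k x \<in> W"
    and Ak: "\<And>f. f \<in> V \<Longrightarrow> bdd W wp (range (\<lambda>x. sm (f x) (k x))) \<and>
                is_lub W wp (range (\<lambda>x. sm (f x) (k x))) (A f)"
    using IO unfolding integral_operator_def by blast
  have FW: "\<And>f x. sm (f x) (k x) \<in> W" using smW kW by blast
  have a: "\<forall>f\<in>V. A f \<in> W" using Ak by (auto simp: is_lub_def)
  have b: "A (vplus pl V f g) = wp (A f) (A g)" if fV: "f \<in> V" "g \<in> V" for f g
  proof -
    have hV: "fplus pl f g \<in> V" using addV fV by blast
    have "range (\<lambda>x. sm (fplus pl f g x) (k x)) = range (\<lambda>x. wp (sm (f x) (k x)) (sm (g x) (k x)))"
      by (simp add: fplus_def sm_dist kW)
    then have "is_lub W wp (range (\<lambda>x. wp (sm (f x) (k x)) (sm (g x) (k x)))) (A (fplus pl f g))"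
      using Ak[OF hV] by simp
    moreover have "is_lub W wp (range (\<lambda>x. wp (sm (f x) (k x)) (sm (g x) (k x)))) (wp (A f) (A g))"
      using lub_range_join[OF sgW, of "\<lambda>x. sm (f x) (k x)" "\<lambda>x. sm (g x) (k x)"] FW Ak fV by blast
    ultimately show ?thesis using lub_unique[OF comW] eV fV by metis
  qed
  have c: "A (fsm ml c f) = sm c (A f)" if fV: "f \<in> V" for c f
  proof -
    have eq: "range (\<lambda>x. sm (fsm ml c f x) (k x)) = sm c ` range (\<lambda>x. sm (f x) (k x))"
      by (simp add: fsm_def sm_assoc kW image_image)
    have "is_lub W wp (range (\<lambda>x. sm (fsm ml c f x) (k x))) (A (fsm ml c f))"
      using conjunct2[OF Ak[OF smV[OF fV]]] .
    then have 1: "is_lub W wp (sm c ` range (\<lambda>x. sm (f x) (k x))) (A (fsm ml c f))"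
      by (simp only: eq)
    have sub: "range (\<lambda>x. sm (f x) (k x)) \<subseteq> W" using FW by blast
    have 2: "is_lub W wp (sm c ` range (\<lambda>x. sm (f x) (k x))) (sm c (A f))"
      using C4[OF sub conjunct1[OF Ak[OF fV]] conjunct2[OF Ak[OF fV]]] .
    show ?thesis using lub_unique[OF comW 1 2] .
  qed
  have d: "is_lub W wp (A ` S) (A u)"
    if S: "S \<subseteq> V" "bdd V (vplus pl V) S" "is_lub V (vplus pl V) S u" for S u
  proof -
    have S': "bdd V (fplus pl) S" "is_lub V (fplus pl) S u"
      using S bdd_cong[OF S(1) eV] is_lub_cong[OF S(1) eV] by blast+
    have uV: "u \<in> V" using S' by (simp add: is_lub_def)
    have L: "is_lub UNIV (fplus pl) S u" using BL S(1) S' by blast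
    have pt: "is_lub W wp ((\<lambda>f. sm (f x) (k x)) ` S) (sm (u x) (k x))" for x
    proof -
      have l: "is_lub UNIV pl ((\<lambda>f. f x) ` S) (u x)" using fun_lub_pt[OF L] .
      then have "bdd UNIV pl ((\<lambda>f. f x) ` S)" unfolding bdd_def is_lub_def by blast
      from C3[OF kW this l] show ?thesis by (simp add: image_image)
    qed
    show ?thesis
      by (rule lub_interchange[OF sgW, where F = "\<lambda>f x. sm (f x) (k x)"])
         (use FW Ak S(1) uV pt in auto)
  qed
  show ?thesis unfolding b_linear_def using a b c d by blast
qed



lemma delta_lub:
  fixes pl ml :: "'k \<Rightarrow> 'k \<Rightarrow> 'k" and f :: "'x \<Rightarrow> 'k"
  assumes IS: "idem_semiring pl ml zK oK"
  shows "is_lub UNIV (fplus pl) (range (\<lambda>x. fsm ml (f x) (\<lambda>y. if y = x then oK else zK))) f"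
proof (rule fun_lub_of_pt)
  fix y
  have r1: "\<And>a. ml a oK = a" and r0: "\<And>a. ml a zK = zK" and z1: "\<And>a. pl a zK = a"
    and cm: "\<And>a b. pl a b = pl b a" and id: "\<And>a. pl a a = a"
    using IS unfolding idem_semiring_def idem_sg_def by blast+
  have eq: "(\<lambda>g. g y) ` range (\<lambda>x. fsm ml (f x) (\<lambda>y. if y = x then oK else zK))
      = range (\<lambda>x. if y = x then f x else zK)"
    by (auto simp: fsm_def r1 r0 image_iff)
  have "is_lub UNIV pl (range (\<lambda>x. if y = x then f x else zK)) (f y)"
    unfolding is_lub_def lep_def
  proof (intro conjI ballI allI impI)
    show "f y \<in> UNIV" by simp
  next
    fix a assume "a \<in> range (\<lambda>x. if y = x then f x else zK)"
    have zl: "\<And>a. pl zK a = a" using cm z1 by metis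
    show "pl a (f y) = f y" using \<open>a \<in> _\<close> zl id by (auto split: if_splits)
  next
    fix v assume "\<forall>a\<in>range (\<lambda>x. if y = x then f x else zK). pl a v = v"
    then show "pl (f y) v = v" by (metis (mono_tags) rangeI)
  qed
  then show "is_lub UNIV pl ((\<lambda>g. g y) ` range (\<lambda>x. fsm ml (f x) (\<lambda>y. if y = x then oK else zK))) (f y)"
    by (simp only: eq)
qed

lemma dir2:
  fixes pl ml :: "'k \<Rightarrow> 'k \<Rightarrow> 'k" and V :: "('x \<Rightarrow> 'k) set"
  assumes K: "b_complete_semiring pl ml zK oK"
    and FV: "b_complete_functional_semimodule pl ml zK oK V"
    and H: "\<forall>(W :: ('x \<Rightarrow> 'k) set) wp sm wz (A :: ('x \<Rightarrow> 'k) \<Rightarrow> ('x \<Rightarrow> 'k)).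
              b_complete_semimodule pl ml zK oK W wp sm wz \<longrightarrow>
              integral_operator pl ml V W wp sm A \<longrightarrow>
              b_linear V (vplus pl V) (fsm ml) W wp sm A"
  shows "functional_b_semimodule pl ml zK oK V"
proof -
  have IS: "idem_semiring pl ml zK oK" using K by (simp add: b_complete_semiring_def)
  have IO: "integral_operator pl ml V (UNIV :: ('x \<Rightarrow> 'k) set) (fplus pl) (fsm ml) (\<lambda>f. f)"
    unfolding integral_operator_def
  proof (intro exI[of _ "\<lambda>x. \<lambda>y. if y = x then oK else zK"] conjI ballI allI)
    fix f :: "'x \<Rightarrow> 'k"
    have L: "is_lub UNIV (fplus pl) (range (\<lambda>x. fsm ml (f x) (\<lambda>y. if y = x then oK else zK))) f"
      by (rule delta_lub[OF IS])
    then show "is_lub UNIV (fplus pl) (range (\<lambda>x. fsm ml (f x) (\<lambda>y. if y = x then oK else zK))) f" .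
    show "bdd UNIV (fplus pl) (range (\<lambda>x. fsm ml (f x) (\<lambda>y. if y = x then oK else zK)))"
      using L unfolding bdd_def is_lub_def by blast
  qed simp
  have BL: "b_linear V (vplus pl V) (fsm ml) (UNIV :: ('x \<Rightarrow> 'k) set) (fplus pl) (fsm ml) (\<lambda>f. f)"
    using H KX_bcs[OF K] IO by blast
  have veq: "\<And>f g. f \<in> V \<Longrightarrow> g \<in> V \<Longrightarrow> vplus pl V f g = fplus pl f g"
    and Blub: "\<And>S u. S \<subseteq> V \<Longrightarrow> bdd V (vplus pl V) S \<Longrightarrow> is_lub V (vplus pl V) S u \<Longrightarrow>
        is_lub UNIV (fplus pl) S u"
    using BL unfolding b_linear_def by auto
  have FS: "functional_semimodule pl ml zK oK V"
    using FV unfolding b_complete_functional_semimodule_def by (rule conjunct1)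
  have BV: "b_complete_semimodule pl ml zK oK V (vplus pl V) (fsm ml) (fzero zK)"
    using FV unfolding b_complete_functional_semimodule_def by (rule conjunct2)
  have smV: "\<forall>c. \<forall>f\<in>V. fsm ml c f \<in> V" using FS unfolding functional_semimodule_def by (rule conjunct1)
  have "semimodule pl ml zK oK V (vplus pl V) (fsm ml) (fzero zK)"
    using FS unfolding functional_semimodule_def by (rule conjunct2[OF conjunct2])
  then have sgv: "idem_sg V (vplus pl V)" unfolding semimodule_def by (rule conjunct1)
  have vV: "vplus pl V f g \<in> V" if "f \<in> V" "g \<in> V" for f g
    using sgD(1)[OF sgv that that(1)] .
  have addV: "\<forall>f\<in>V. \<forall>g\<in>V. fplus pl f g \<in> V" using vV veq by metis
  have e1: "\<forall>x\<in>V. \<forall>y\<in>V. vplus pl V x y = fplus pl x y" using veq by blast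
  have e2: "\<forall>x\<in>V. \<forall>y\<in>V. fplus pl x y = vplus pl V x y" using veq by simp
  have BC: "b_complete_semimodule pl ml zK oK V (fplus pl) (fsm ml) (fzero zK)"
    by (rule bcs_cong[OF e1 BV])
  have LB: "\<forall>A u. A \<subseteq> V \<longrightarrow> bdd V (fplus pl) A \<longrightarrow> is_lub V (fplus pl) A u \<longrightarrow>
        is_lub UNIV (fplus pl) A u"
  proof (intro allI impI)
    fix A u assume A: "A \<subseteq> V" "bdd V (fplus pl) A" "is_lub V (fplus pl) A u"
    then have "bdd V (vplus pl V) A" "is_lub V (vplus pl V) A u"
      using bdd_cong[OF A(1) e2] is_lub_cong[OF A(1) e2] by blast+
    then show "is_lub UNIV (fplus pl) A u" using Blub A(1) by blast
  qed
  show ?thesis unfolding functional_b_semimodule_def using addV smV BC LB by blast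
qed

theorem proposition7p21:
  fixes pl ml :: "'k \<Rightarrow> 'k \<Rightarrow> 'k" and zK oK :: 'k
    and V :: "('x \<Rightarrow> 'k) set"
  assumes "b_complete_semiring pl ml zK oK"
    and "b_complete_functional_semimodule pl ml zK oK V"
  shows "(functional_b_semimodule pl ml zK oK V \<longrightarrow>
           (\<forall>(W :: 'w set) wp sm wz (A :: ('x \<Rightarrow> 'k) \<Rightarrow> 'w).
              b_complete_semimodule pl ml zK oK W wp sm wz \<longrightarrow>
              integral_operator pl ml V W wp sm A \<longrightarrow>
              b_linear V (vplus pl V) (fsm ml) W wp sm A))
       \<and> ((\<forall>(W :: ('x \<Rightarrow> 'k) set) wp sm wz (A :: ('x \<Rightarrow> 'k) \<Rightarrow> ('x \<Rightarrow> 'k)).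
              b_complete_semimodule pl ml zK oK W wp sm wz \<longrightarrow>
              integral_operator pl ml V W wp sm A \<longrightarrow>
              b_linear V (vplus pl V) (fsm ml) W wp sm A)
           \<longrightarrow> functional_b_semimodule pl ml zK oK V)"
proof (intro conjI impI allI)
  fix W :: "'w set" and wp sm wz and A :: "('x \<Rightarrow> 'k) \<Rightarrow> 'w"
  assume a: "functional_b_semimodule pl ml zK oK V" and b: "b_complete_semimodule pl ml zK oK W wp sm wz"
    and c: "integral_operator pl ml V W wp sm A"
  show "b_linear V (vplus pl V) (fsm ml) W wp sm A" by (rule dir1[OF assms(1) a b c])
next
  assume "\<forall>(W :: ('x \<Rightarrow> 'k) set) wp sm wz (A :: ('x \<Rightarrow> 'k) \<Rightarrow> ('x \<Rightarrow> 'k)).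
              b_complete_semimodule pl ml zK oK W wp sm wz \<longrightarrow>
              integral_operator pl ml V W wp sm A \<longrightarrow>
              b_linear V (vplus pl V) (fsm ml) W wp sm A"
  then show "functional_b_semimodule pl ml zK oK V" using dir2[OF assms] by blast
qed

end
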